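(* Let $A$ be an abelian group of order $n$ whose $2$-Sylow subgroup is either non-cyclic or trivial. Then (a) $P_a\in\operatorname{SL}_n$ for every $a\in A$, and (b) $D_\chi\in\operatorname{SL}_n$ for every $\chi\in A^{\ast}$.
   Context: $k$ is an algebraically closed field of characteristic $0$, $A^{\ast}=\operatorname{Hom}(A,k^{\times})$ is the character group of $A$, and $V=k[A]$ is the group algebra of $A$, identified with $k^n$ via the basis $\{a : a\in A\}$, so $\operatorname{GL}(V)=\operatorname{GL}_n$. For $a\in A$, $P_a\in\operatorname{GL}(V)$ is defined by $P_a(\sum_{b\in A}c_b b)=\sum_{b\in A}c_b\, ab$; for $\chi\in A^{\ast}$, $D_\chi\in\operatorname{GL}(V)$ is defined by $D_\chi(\sum_{a\in A}c_a a)=\sum_{a\in A}c_a\chi(a)\,a$ ($c_a,c_b\in k$). *)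

theory Defs
  imports "HOL-Analysis.Analysis" "HOL-Algebra.Algebra" "HOL-Computational_Algebra.Polynomial"
begin

text \<open>The group A is a finite group structure G whose carrier is the whole finite type 'a,
  so V = k[A] = k^n with basis indexed by 'a, and GL(V) consists of matrices k^'a^'a.\<close>

definition perm_op :: "('a, 'm) monoid_scheme \<Rightarrow> 'a \<Rightarrow> ('k::comm_ring_1) ^ ('a::finite) ^ 'a" where
  "perm_op G a = (\<chi> i j. if i = a \<otimes>\<^bsub>G\<^esub> j then 1 else 0)"

definition diag_op :: "('a \<Rightarrow> 'k) \<Rightarrow> ('k::comm_ring_1) ^ ('a::finite) ^ 'a" where
  "diag_op c = (\<chi> i j. if i = j then c i else 0)"

definition character :: "('a, 'm) monoid_scheme \<Rightarrow> ('a \<Rightarrow> 'k::field) \<Rightarrow> bool" where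
  "character G c \<longleftrightarrow> (\<forall>x\<in>carrier G. c x \<noteq> 0) \<and>
     (\<forall>x\<in>carrier G. \<forall>y\<in>carrier G. c (x \<otimes>\<^bsub>G\<^esub> y) = c x * c y)"

definition sylow2 :: "('a, 'm) monoid_scheme \<Rightarrow> 'a set \<Rightarrow> bool" where
  "sylow2 G P \<longleftrightarrow> subgroup P G \<and> card P = 2 ^ multiplicity (2::nat) (order G)"

definition cyclic_subgroup :: "('a, 'm) monoid_scheme \<Rightarrow> 'a set \<Rightarrow> bool" where
  "cyclic_subgroup G P \<longleftrightarrow> (\<exists>g\<in>P. P = generate G {g})"

definition alg_closed :: "'k::field itself \<Rightarrow> bool" where
  "alg_closed _ \<longleftrightarrow> (\<forall>p::'k poly. Polynomial.degree p \<ge> 1 \<longrightarrow> (\<exists>x. Polynomial.poly p x = 0))"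

end

theory Submission imports Defs "HOL-Combinatorics.Cycles" "HOL-Algebra.Sym_Groups"
begin

lemma nat_2part:
  fixes n m :: nat
  assumes "n > 0" "m dvd n" "even n" "\<not> m dvd n div 2"
  shows "2 ^ multiplicity 2 n dvd m" "multiplicity (2::nat) n \<ge> 1"
proof -
  obtain q where q: "n = m * q" using assms(2) by blast
  have "odd q"
  proof
    assume "even q"
    then obtain r where "q = 2 * r" by blast
    then have "n div 2 = m * r" using q by simp
    then show False using assms(4) by simp
  qed
  have o0: "m \<noteq> 0" "q \<noteq> 0" using q assms(1) by auto
  have "multiplicity 2 n = multiplicity 2 m + multiplicity (2::nat) q"
    using q o0 by (simp add: prime_elem_multiplicity_mult_distrib)
  moreover have "multiplicity (2::nat) q = 0" using \<open>odd q\<close> o0 multiplicity_eq_zero_iff[of q "2::nat"] by simp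
  ultimately show "2 ^ multiplicity 2 n dvd m" by (simp add: multiplicity_dvd)
  show "multiplicity (2::nat) n \<ge> 1"
    using assms(1,3) by (metis multiplicity_gt_zero_iff less_one not_gr0 not_le dvd_refl
        neq0_conv not_prime_unit prime_nat_iff two_is_prime_nat)
qed

lemma sylow_elem_contra:
  fixes G :: "('a::finite) monoid"
  assumes "group G" "carrier G = UNIV"
    "\<forall>P. sylow2 G P \<longrightarrow> P = {\<one>\<^bsub>G\<^esub>} \<or> \<not> cyclic_subgroup G P"
    "b \<in> carrier G" "group.ord G b = 2^multiplicity 2 (order G)" "multiplicity (2::nat) (order G) \<ge> 1"
  shows False
proof -
  interpret group G by fact
  define P where "P = generate G {b}"
  have sub: "subgroup P G" unfolding P_def using assms(4) by (intro generate_is_subgroup) auto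
  have card: "card P = 2^multiplicity 2 (order G)" unfolding P_def
    using generate_pow_card[OF assms(4)] assms(5) by simp
  have cyc: "cyclic_subgroup G P" unfolding cyclic_subgroup_def P_def
    using generate.incl[of b "{b}" G] by blast
  have "sylow2 G P" unfolding sylow2_def using sub card by simp
  then have "P = {\<one>\<^bsub>G\<^esub>}" using assms(3) cyc by blast
  then have "card P = 1" by simp
  moreover have "(2::nat)^multiplicity 2 (order G) \<ge> 2" using assms(6)
    by (metis power_increasing power_one_right less_imp_le_nat one_less_numeral_iff semiring_norm(76) le_neq_implies_less order_refl)
  ultimately show False using card by simp
qed

lemma exists_2elem:
  fixes G :: "('a::finite) monoid"
  assumes "group G" "carrier G = UNIV" "a \<in> carrier G" "even (order G)"
    "\<not> group.ord G a dvd order G div 2"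
  shows "\<exists>b\<in>carrier G. group.ord G b = 2^multiplicity 2 (order G) \<and> multiplicity (2::nat) (order G) \<ge> 1"
proof -
  interpret group G by fact
  have fin: "finite (carrier G)" using assms(2) by simp
  have n0: "order G > 0" using fin by (simp add: order_gt_0_iff_finite)
  have od: "ord a dvd order G" using ord_dvd_group_order[OF assms(3)] .
  note np = nat_2part[OF n0 od assms(4,5)]
  define v where "v = multiplicity (2::nat) (order G)"
  have o1: "ord a \<ge> 1" using ord_ge_1[OF fin assms(3)] .
  obtain k where k: "ord a = 2^v * k" using np(1) unfolding v_def by blast
  have k0: "k \<noteq> 0" using k o1 by auto
  have "ord (a [^]\<^bsub>G\<^esub> k) = ord a div k" using ord_pow[OF assms(3)] k k0 by simp
  also have "\<dots> = 2^v" using k k0 by simp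
  finally show ?thesis using np(2) assms(3) unfolding v_def by (intro bexI[of _ "a [^]\<^bsub>G\<^esub> k"]) auto
qed

lemma transl_swapidseq:
  fixes G :: "('a, 'm) monoid_scheme" (structure)
  assumes grp: "group G" and fin: "finite (carrier G)" and c: "c \<in> carrier G"
  shows "finite S \<Longrightarrow> S \<subseteq> carrier G \<Longrightarrow> (\<forall>y\<in>S. c \<otimes>\<^bsub>G\<^esub> y \<in> S) \<Longrightarrow>
    group.ord G c dvd card S \<and>
    swapidseq_ext S (card S div group.ord G c * (group.ord G c - 1)) (\<lambda>y. if y \<in> S then c \<otimes>\<^bsub>G\<^esub> y else y)"
proof (induction "card S" arbitrary: S rule: less_induct)
  case (less S)
  interpret group G by fact
  define o' where "o' = ord c"
  have o1: "o' \<ge> 1" using ord_ge_1[OF fin c] o'_def by simp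
  show ?case
  proof (cases "S = {}")
    case True
    have "(\<lambda>y. if y \<in> S then c \<otimes> y else y) = id" using True by auto
    then show ?thesis using True swapidseq_ext.empty by simp
  next
    case False
    then obtain x where x: "x \<in> S" by blast
    have xc: "x \<in> carrier G" using x less.prems by auto
    have cl: "c [^] i \<otimes> x \<in> S" for i :: nat
    proof (induction i)
      case 0 then show ?case using x xc by simp
    next
      case (Suc i)
      have "c [^] Suc i \<otimes> x = c \<otimes> (c [^] i \<otimes> x)"
        using c xc by (metis nat_pow_Suc2 m_assoc nat_pow_closed)
      then show ?case using Suc less.prems(3) by simp
    qed
    define cs where "cs = map (\<lambda>i. c [^] i \<otimes> x) (upt 0 o')"
    define Orb where "Orb = set cs"
    have inj: "inj_on (\<lambda>i. c [^] i \<otimes> x) {0..<o'}"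
    proof (rule inj_onI)
      fix i j assume ij: "i \<in> {0..<o'}" "j \<in> {0..<o'}" "c [^] i \<otimes> x = c [^] j \<otimes> x"
      then have "c [^] i = c [^] j" using c xc by (metis nat_pow_closed r_cancel)
      moreover have "inj_on (\<lambda>k. c [^] k) {0..ord c - 1}" using ord_inj[OF c] .
      ultimately show "i = j" using ij o'_def o1 by (auto simp: inj_on_def)
    qed
    have dist: "distinct cs" unfolding cs_def using inj by (simp add: distinct_map)
    have lcs: "length cs = o'" unfolding cs_def by simp
    have cardX: "card Orb = o'" unfolding Orb_def using dist lcs distinct_card by blast
    have XS: "Orb \<subseteq> S" unfolding Orb_def cs_def using cl by auto
    have cyc: "cycle_of_list cs y = c \<otimes> y" if "y \<in> Orb" for y
    proof -
      obtain i where i: "i < o'" "y = cs ! i" using \<open>y \<in> Orb\<close> unfolding Orb_def by (metis in_set_conv_nth lcs)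
      have "cycle_of_list cs y = map (cycle_of_list cs) cs ! i" using i lcs by simp
      also have "\<dots> = rotate1 cs ! i" using cyclic_rotation[OF dist, of 1] by simp
      also have "\<dots> = cs ! (Suc i mod o')" using nth_rotate1[of i cs] i lcs by simp
      also have "\<dots> = c [^] (Suc i) \<otimes> x"
      proof (cases "Suc i < o'")
        case True then show ?thesis unfolding cs_def by simp
      next
        case False
        then have "Suc i = o'" using i by simp
        then have e1: "c [^] (Suc i) = \<one>" using o'_def pow_ord_eq_1[OF c] by simp
        have "cs ! (Suc i mod o') = cs ! 0" using \<open>Suc i = o'\<close> by simp
        also have "\<dots> = x" using o1 xc unfolding cs_def by simp
        also have "\<dots> = c [^] (Suc i) \<otimes> x" using xc e1 by (metis l_one)
        finally show ?thesis .
      qed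
      also have "\<dots> = c \<otimes> y"
      proof -
        have yi: "y = c [^] i \<otimes> x" using i unfolding cs_def by simp
        show ?thesis unfolding yi using c xc by (metis nat_pow_Suc2 m_assoc nat_pow_closed)
      qed
      finally show ?thesis .
    qed
    have imX: "(\<lambda>y. c \<otimes> y) ` Orb = Orb"
    proof -
      have "(\<lambda>y. c \<otimes> y) ` Orb = cycle_of_list cs ` Orb" by (rule image_cong) (auto simp: cyc)
      then show ?thesis using cycle_is_surj[OF dist] unfolding Orb_def by simp
    qed
    define S' where "S' = S - Orb"
    have S'sub: "S' \<subseteq> carrier G" "finite S'" using less.prems unfolding S'_def by auto
    have S'cl: "\<forall>y\<in>S'. c \<otimes> y \<in> S'"
    proof
      fix y assume y: "y \<in> S'"
      have "c \<otimes> y \<notin> Orb"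
      proof
        assume "c \<otimes> y \<in> Orb"
        then obtain z where z: "z \<in> Orb" "c \<otimes> y = c \<otimes> z" using imX by (metis imageE)
        have yc: "y \<in> carrier G" using y S'sub by auto
        have zc: "z \<in> carrier G" using z XS less.prems(2) by auto
        have "y = z" using l_cancel[OF z(2) yc zc c] .
        then show False using y z S'_def by simp
      qed
      then show "c \<otimes> y \<in> S'" using y less.prems(3) S'_def by auto
    qed
    have "card S' < card S"
    proof -
      have fO: "finite Orb" using XS less.prems(1) finite_subset by blast
      have "card Orb \<le> card S" using XS less.prems(1) by (simp add: card_mono)
      then show ?thesis unfolding S'_def using card_Diff_subset[OF fO XS] cardX o1 by simp
    qed
    from less.hyps[OF this S'sub(2) S'sub(1) S'cl]
    have IH: "o' dvd card S'" "swapidseq_ext S' (card S' div o' * (o' - 1)) (\<lambda>y. if y \<in> S' then c \<otimes> y else y)"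
      unfolding o'_def by auto
    have SU: "S = S' \<union> Orb" using XS S'_def by auto
    have disj: "S' \<inter> Orb = {}" using S'_def by auto
    have cS: "card S = card S' + o'" using SU disj cardX S'sub(2) less.prems(1) XS
      by (simp add: card_Un_disjoint finite_subset)
    have ext: "swapidseq_ext (S' \<union> Orb) (card S' div o' * (o' - 1) + (o' - 1))
          ((\<lambda>y. if y \<in> S' then c \<otimes> y else y) \<circ> cycle_of_list cs)"
      using swapidseq_ext_extension[OF IH(2) swapidseq_ext_of_cycles[OF dist] disj[unfolded Orb_def]] lcs
      unfolding Orb_def by simp
    have feq: "((\<lambda>y. if y \<in> S' then c \<otimes> y else y) \<circ> cycle_of_list cs) = (\<lambda>y. if y \<in> S then c \<otimes> y else y)"
    proof
      fix y
      show "((\<lambda>y. if y \<in> S' then c \<otimes> y else y) \<circ> cycle_of_list cs) y = (if y \<in> S then c \<otimes> y else y)"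
      proof (cases "y \<in> Orb")
        case True
        then have "c \<otimes> y \<in> Orb" using imX by blast
        then show ?thesis using True cyc XS S'_def by auto
      next
        case False
        then show ?thesis using id_outside_supp[of y cs] SU unfolding Orb_def by auto
      qed
    qed
    have "card S div o' * (o' - 1) = card S' div o' * (o' - 1) + (o' - 1)"
      using cS IH(1) o1 by (auto elim!: dvdE simp: algebra_simps)
    then show ?thesis using ext feq SU cS IH(1) unfolding o'_def by simp
  qed
qed

lemma prod_linear_dvd:
  fixes p :: "'k::field poly"
  assumes "finite S" "\<forall>s\<in>S. poly p s = 0"
  shows "(\<Prod>s\<in>S. [:-s, 1:]) dvd p"
  using assms
proof (induction S rule: finite_induct)
  case empty then show ?case by simp
next
  case (insert s S)
  then obtain r where r: "p = (\<Prod>t\<in>S. [:-t, 1:]) * r" by (meson dvdE insert_iff)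
  have "poly (\<Prod>t\<in>S. [:-t, 1:]) s \<noteq> 0" using insert(1,2) by (auto simp: poly_prod)
  moreover have "poly p s = 0" using insert by simp
  ultimately have "poly r s = 0" using r by simp
  then have "[:-s, 1:] dvd r" using poly_eq_0_iff_dvd by blast
  then have "(\<Prod>t\<in>S. [:-t, 1:]) * [:-s, 1:] dvd (\<Prod>t\<in>S. [:-t, 1:]) * r" by (rule mult_dvd_mono[OF dvd_refl])
  moreover have "(\<Prod>t\<in>insert s S. [:-t, 1:]) = (\<Prod>t\<in>S. [:-t, 1:]) * [:-s, 1:]" using insert(1,2) by (simp add: mult.commute)
  ultimately show ?case using r by simp
qed

lemma prod_roots_unity:
  fixes H :: "'k::field set"
  assumes fin: "finite H" and d: "card H = d" "d \<ge> 1" and roots: "\<forall>h\<in>H. h^d = 1"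
  shows "\<Prod>H = (-1)^(d+1)"
proof -
  define p :: "'k poly" where "p = Polynomial.monom 1 d - 1"
  have pp: "poly p x = x^d - 1" for x unfolding p_def by (simp add: poly_monom)
  have degp: "Polynomial.degree p = d"
  proof -
    have "Polynomial.monom (1::'k) d - 1 = Polynomial.monom 1 d + (- 1)" by simp
    moreover have "Polynomial.degree (- 1 :: 'k poly) < Polynomial.degree (Polynomial.monom (1::'k) d)"
      using d by (simp add: degree_monom_eq)
    ultimately show ?thesis unfolding p_def by (metis degree_add_eq_left degree_monom_eq one_neq_zero)
  qed
  have lcp: "Polynomial.lead_coeff p = 1" using degp d unfolding p_def by (simp add: coeff_monom)
  define Q where "Q = (\<Prod>s\<in>H. [:-s, 1:])"
  have "Q dvd p" unfolding Q_def using prod_linear_dvd[OF fin] roots pp by simp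
  then obtain r where r: "p = Q * r" by blast
  have Q0: "Q \<noteq> 0" unfolding Q_def using fin by (simp add: prod_zero_iff)
  have degQ: "Polynomial.degree Q = d" unfolding Q_def using fin d
    by (subst degree_prod_eq_sum_degree) auto
  have lcQ: "Polynomial.lead_coeff Q = 1" unfolding Q_def by (simp add: lead_coeff_prod)
  have r0: "r \<noteq> 0" using r degp d by auto
  have "Polynomial.degree p = Polynomial.degree Q + Polynomial.degree r" using r Q0 r0 degree_mult_eq by simp
  then have dr: "Polynomial.degree r = 0" using degp degQ by simp
  have "Polynomial.lead_coeff r = 1" using r lcp lcQ by (simp add: lead_coeff_mult)
  then have "r = 1" using dr by (metis degree_eq_zeroE lead_coeff_pCons(2) one_pCons pCons_0_0 coeff_pCons_0)
  then have "p = Q" using r by simp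
  then have "poly p 0 = poly Q 0" by simp
  then have "-1 = (\<Prod>s\<in>H. - s)" unfolding Q_def using pp d by (simp add: poly_prod power_0_left)
  also have "\<dots> = (\<Prod>s\<in>H. (-1) * s)" by simp
  also have "\<dots> = (\<Prod>s\<in>H. (-1)) * \<Prod>H" by (rule prod.distrib)
  also have "\<dots> = (-1)^d * \<Prod>H" using d by simp
  finally have "(-1)^d * (-1) = (-1)^d * ((-1)^d * \<Prod>H)" by simp
  also have "\<dots> = \<Prod>H" by (simp flip: mult.assoc power_add add: power_even_eq[symmetric] mult_2[symmetric])
  finally show ?thesis by simp
qed

lemma char_prod:
  fixes G :: "('a::finite) monoid" (structure) and f :: "'a \<Rightarrow> 'k::field_char_0"
  assumes grp: "group G" and univ: "carrier G = UNIV" and ch: "character G f"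
    and ne: "(\<Prod>a\<in>UNIV. f a) \<noteq> 1"
  shows "\<exists>a. even (order G) \<and> \<not> group.ord G a dvd order G div 2"
proof -
  interpret group G by fact
  have mul: "f (x \<otimes> y) = f x * f y" for x y using ch univ unfolding character_def by auto
  have nz: "f x \<noteq> 0" for x using ch univ unfolding character_def by auto
  have f1: "f \<one> = 1"
  proof -
    have "f \<one> = f \<one> * f \<one>" using mul[of \<one> \<one>] by simp
    then show ?thesis using nz[of \<one>] by simp
  qed
  have fpow: "f (x [^] (k::nat)) = f x ^ k" for x k
    by (induction k) (auto simp: f1 mul)
  have finv: "f (inv x) * f x = 1" for x
    using mul[of "inv x" x] univ f1 by simp
  define H where "H = range f"
  define K where "K = {a. f a = 1}"
  define d where "d = card H"
  define m where "m = card K"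
  define n where "n = order G"
  have finH: "finite H" unfolding H_def by simp
  have fib: "card {a. f a = h} = m" if hH: "h \<in> H" for h
  proof -
    obtain a0 where a0: "h = f a0" using hH unfolding H_def by blast
    have "{a. f a = h} = (\<lambda>k. a0 \<otimes> k) ` K"
    proof
      show "{a. f a = h} \<subseteq> (\<lambda>k. a0 \<otimes> k) ` K"
      proof
        fix a assume "a \<in> {a. f a = h}"
        then have fa: "f a = h" by simp
        have "a0 \<otimes> (inv a0 \<otimes> a) = a" using univ by (simp add: m_assoc[symmetric])
        moreover have "f (inv a0 \<otimes> a) = 1" using mul finv fa a0 by simp
        ultimately show "a \<in> (\<lambda>k. a0 \<otimes> k) ` K" unfolding K_def by (metis (mono_tags, lifting) image_eqI mem_Collect_eq)
      qed
      show "(\<lambda>k. a0 \<otimes> k) ` K \<subseteq> {a. f a = h}" unfolding K_def using mul a0 by auto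
    qed
    moreover have "inj_on (\<lambda>k. a0 \<otimes> k) K"
      by (rule inj_onI) (use univ l_cancel in blast)
    ultimately show ?thesis unfolding m_def by (simp add: card_image)
  qed
  have prodeq: "(\<Prod>a\<in>UNIV. f a) = (\<Prod>h\<in>H. h ^ m)"
  proof -
    have "(\<Prod>a\<in>UNIV. f a) = (\<Prod>y\<in>H. prod f {x\<in>UNIV. f x = y})"
      unfolding H_def by (rule prod.image_gen) simp
    also have "\<dots> = (\<Prod>h\<in>H. h ^ m)"
    proof (rule prod.cong[OF refl])
      fix y assume y: "y \<in> H"
      have "prod f {x\<in>UNIV. f x = y} = prod (\<lambda>_. y) {x. f x = y}" by (rule prod.cong) auto
      then show "prod f {x\<in>UNIV. f x = y} = y ^ m" using fib[OF y] by simp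
    qed
    finally show ?thesis .
  qed
  have cardeq: "n = d * m"
  proof -
    have "n = (\<Sum>a\<in>(UNIV::'a set). (1::nat))" unfolding n_def order_def univ by simp
    also have "\<dots> = (\<Sum>y\<in>H. sum (\<lambda>_. 1::nat) {x\<in>(UNIV::'a set). f x = y})"
      unfolding H_def by (rule sum.image_gen) simp
    also have "\<dots> = (\<Sum>y\<in>H. m)" using fib by (intro sum.cong) auto
    finally show ?thesis unfolding d_def by simp
  qed
  have Hmul: "h * g \<in> H" if "h \<in> H" "g \<in> H" for h g
    using that mul unfolding H_def by (metis rangeE rangeI)
  have H0: "0 \<notin> H" unfolding H_def using nz by auto
  have P0: "\<Prod>H \<noteq> 0" using finH H0 by (simp add: prod_zero_iff)
  have hd: "h ^ d = 1" if h: "h \<in> H" for h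
  proof -
    have h0: "h \<noteq> 0" using h H0 by auto
    have inj: "inj_on ((*) h) H" using h0 by (auto simp: inj_on_def)
    have sub: "(*) h ` H \<subseteq> H" using Hmul h by auto
    have im: "(*) h ` H = H"
      using card_subset_eq[OF finH sub] card_image[OF inj] by simp
    have "\<Prod>H = prod (\<lambda>x. x) ((*) h ` H)" using im by simp
    also have "\<dots> = (\<Prod>g\<in>H. h * g)" using prod.reindex[OF inj, of "\<lambda>x. x"] by simp
    also have "\<dots> = (\<Prod>g\<in>H. h) * \<Prod>H" by (rule prod.distrib)
    also have "\<dots> = h ^ d * \<Prod>H" unfolding d_def by simp
    finally show ?thesis using P0 by simp
  qed
  have d1: "d \<ge> 1" unfolding d_def H_def using finH H_def by (simp add: Suc_leI card_gt_0_iff)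
  have prodH: "\<Prod>H = (-1)^(d+1)"
    using prod_roots_unity[OF finH _ d1] hd unfolding d_def by simp
  have "(\<Prod>a\<in>UNIV. f a) = (\<Prod>H) ^ m" unfolding prodeq by (simp add: prod_power_distrib)
  also have "\<dots> = (-1) ^ ((d+1) * m)" unfolding prodH by (simp only: power_mult)
  finally have "odd ((d+1) * m)" using ne by auto
  then have de: "even d" and mo: "odd m" by auto
  have "\<exists>h\<in>H. h ^ (d div 2) \<noteq> 1"
  proof (rule ccontr)
    assume "\<not> ?thesis"
    then have allh: "\<forall>h\<in>H. h ^ (d div 2) = 1" by auto
    define p :: "'k poly" where "p = Polynomial.monom 1 (d div 2) - 1"
    have pp: "poly p x = x ^ (d div 2) - 1" for x unfolding p_def by (simp add: poly_monom)
    have p0: "p \<noteq> 0" using pp[of 0] de d1 by (auto simp: power_0_left)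
    have "H \<subseteq> {x. poly p x = 0}" using allh pp by auto
    then have "d \<le> card {x. poly p x = 0}" unfolding d_def
      using poly_roots_finite[OF p0] by (simp add: card_mono)
    also have "\<dots> \<le> Polynomial.degree p" by (rule card_poly_roots_bound[OF p0])
    also have "\<dots> \<le> d div 2" unfolding p_def
      using degree_diff_le_max[of "Polynomial.monom (1::'k) (d div 2)" 1] by (simp add: degree_monom_eq)
    finally show False using d1 by simp
  qed
  then obtain h where h: "h \<in> H" "h ^ (d div 2) \<noteq> 1" by blast
  then obtain a where a: "f a = h" unfolding H_def by blast
  have ne2: "even n" using cardeq de by simp
  have "\<not> ord a dvd n div 2"
  proof
    assume "ord a dvd n div 2"
    then have "a [^] (n div 2) = \<one>" using pow_eq_id univ by simp
    then have "h ^ (n div 2) = 1" using fpow a f1 by metis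
    moreover obtain j where j: "m = 2 * j + 1" using mo by (metis oddE)
    moreover have "n div 2 = d * j + d div 2" using cardeq de j by (auto elim!: evenE simp: algebra_simps)
    ultimately have "(h ^ d) ^ j * h ^ (d div 2) = 1" by (simp add: power_add power_mult)
    then show False using hd[OF h(1)] h(2) by simp
  qed
  then show ?thesis using ne2 unfolding n_def by blast
qed

lemma no_bad_elem:
  fixes G :: "('a::finite) monoid"
  assumes "group G" "carrier G = UNIV"
    "\<forall>P. sylow2 G P \<longrightarrow> P = {\<one>\<^bsub>G\<^esub>} \<or> \<not> cyclic_subgroup G P"
    "even (order G)" "\<not> group.ord G a dvd order G div 2"
  shows False
proof -
  obtain b where "b \<in> carrier G" "group.ord G b = 2^multiplicity 2 (order G)" "multiplicity (2::nat) (order G) \<ge> 1"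
    using exists_2elem[OF assms(1,2) _ assms(4,5)] assms(2) by blast
  then show False using sylow_elem_contra[OF assms(1,2,3)] by blast
qed

lemma perm_op_det:
  fixes G :: "('a::finite) monoid" (structure)
  assumes grp: "group G" and univ: "carrier G = UNIV"
    and hyp: "\<forall>P. sylow2 G P \<longrightarrow> P = {\<one>\<^bsub>G\<^esub>} \<or> \<not> cyclic_subgroup G P"
  shows "det (perm_op G a :: 'k::comm_ring_1 ^ 'a ^ 'a) = 1"
proof -
  interpret group G by fact
  define c where "c = inv a"
  define p where "p = (\<lambda>y. c \<otimes> y)"
  have cc: "c \<in> carrier G" using univ by simp
  have pperm: "p permutes UNIV"
  proof (rule bij_imp_permutes)
    show "bij_betw p UNIV UNIV"
      by (rule bij_betwI[where g = "\<lambda>y. a \<otimes> y"]) (auto simp: p_def c_def univ m_assoc[symmetric])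
  qed simp
  have peq: "p i = j \<longleftrightarrow> i = a \<otimes> j" for i j
    unfolding p_def c_def using univ by (metis inv_closed inv_inv l_inv m_assoc l_one UNIV_I r_inv)
  have "perm_op G a = (\<chi> i. (mat 1 :: 'k ^ 'a ^ 'a) $ p i)"
    unfolding perm_op_def mat_def by (simp add: vec_eq_iff peq)
  then have dp: "det (perm_op G a :: 'k ^ 'a ^ 'a) = of_int (sign p)"
    using det_permute_rows[OF pperm, of "mat 1 :: 'k ^ 'a ^ 'a"] by simp
  define o' where "o' = ord c"
  define n where "n = order G"
  have fin: "finite (carrier G)" using univ by simp
  have T: "o' dvd card (UNIV :: 'a set) \<and>
      swapidseq_ext UNIV (card (UNIV :: 'a set) div o' * (o' - 1)) (\<lambda>y. if y \<in> UNIV then c \<otimes> y else y)"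
    using transl_swapidseq[OF grp fin cc, of UNIV] univ unfolding o'_def by simp
  have cardn: "card (UNIV :: 'a set) = n" unfolding n_def order_def univ ..
  define N where "N = n div o' * (o' - 1)"
  have "swapidseq_ext UNIV N p" using T unfolding N_def cardn p_def by simp
  then have "swapidseq N p" by (rule swapidseq_ext_imp_swapidseq)
  then have ev: "evenperm p = even N" using evenperm_unique by blast
  have "even N"
  proof (rule ccontr)
    assume oN: "odd N"
    then have o1: "odd (n div o')" "odd (o' - 1)" unfolding N_def by auto
    have o'0: "o' \<ge> 1" using ord_ge_1[OF fin cc] o'_def by simp
    have eo: "even o'" using o1(2) o'0 by (metis One_nat_def Suc_pred even_Suc le_simps(3) less_one not_less)
    have no: "n = o' * (n div o')" using T cardn by simp
    have en: "even n" using eo no by (metis even_mult_iff)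
    have "\<not> o' dvd n div 2"
    proof
      assume "o' dvd n div 2"
      then obtain t where t: "n div 2 = o' * t" by blast
      then have "n = o' * (2 * t)" using en by (metis dvd_mult_div_cancel mult.left_commute)
      then have "n div o' = 2 * t" using o'0 by simp
      then show False using o1(1) by simp
    qed
    then show False using no_bad_elem[OF grp univ hyp] en unfolding n_def o'_def by blast
  qed
  then have "sign p = 1" using ev unfolding sign_def by simp
  then show ?thesis using dp by simp
qed

theorem lemma8p9:
  fixes G :: "('a::finite) monoid"
  assumes "alg_closed TYPE('k::field_char_0)"
    and "comm_group G"
    and "carrier G = UNIV"
    and "\<forall>P. sylow2 G P \<longrightarrow> P = {\<one>\<^bsub>G\<^esub>} \<or> \<not> cyclic_subgroup G P"
  shows "(\<forall>a\<in>carrier G. det (perm_op G a :: 'k ^ 'a ^ 'a) = 1)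
    \<and> (\<forall>c :: 'a \<Rightarrow> 'k. character G c \<longrightarrow> det (diag_op c) = 1)"
proof -
  have grp: "group G" using assms(2) comm_group.axioms(2) by blast
  have A: "\<forall>a\<in>carrier G. det (perm_op G a :: 'k ^ 'a ^ 'a) = 1"
    using perm_op_det[OF grp assms(3,4)] by blast
  have B: "det (diag_op c) = 1" if ch: "character G c" for c :: "'a \<Rightarrow> 'k"
  proof -
    have "det (diag_op c) = (\<Prod>i\<in>UNIV. c i)"
      by (subst det_diagonal) (auto simp: diag_op_def)
    moreover have "(\<Prod>i\<in>UNIV. c i) = 1"
    proof (rule ccontr)
      assume "(\<Prod>i\<in>UNIV. c i) \<noteq> 1"
      then obtain a where "even (order G)" "\<not> group.ord G a dvd order G div 2"
        using char_prod[OF grp assms(3) ch] by blast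
      then show False using no_bad_elem[OF grp assms(3,4)] by blast
    qed
    ultimately show ?thesis by simp
  qed
  show ?thesis using A B by blast
qed

end
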